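(* Let $M$ be a primary submonoid of a free commutative monoid (of arbitrary rank). Then $M$ has finite rank $d:=\mathrm{rank}(M)$, and $M$ is isomorphic to a submonoid of $(\mathbb{N}^d,+)$.
   Context: Convention: all monoids are commutative, cancellative, and reduced, written additively; $M^\bullet=M\setminus\{0\}$; $\mathrm{rank}(M)$ is the rank of the Grothendieck group $\mathrm{gp}(M)$ as a $\mathbb{Z}$-module. $M$ is primary if $M$ is nontrivial and for all $x,y\in M^\bullet$ there is $n\in\mathbb{N}$ with $ny\in x+M$. *)

theory Defs
  imports Main
begin

text \<open>The free commutative monoid on a set of generators of type 'i (arbitrary rank):
  finitely supported functions 'i => nat under pointwise addition.\<close>
definition free_cmon :: "('i \<Rightarrow> nat) set" where
  "free_cmon = {f. finite {i. f i \<noteq> 0}}"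

definition madd :: "('i \<Rightarrow> nat) \<Rightarrow> ('i \<Rightarrow> nat) \<Rightarrow> ('i \<Rightarrow> nat)" where
  "madd x y = (\<lambda>i. x i + y i)"

definition is_submonoid_free :: "('i \<Rightarrow> nat) set \<Rightarrow> bool" where
  "is_submonoid_free M \<longleftrightarrow> M \<subseteq> free_cmon \<and> (\<lambda>_. 0) \<in> M \<and>
     (\<forall>x\<in>M. \<forall>y\<in>M. madd x y \<in> M)"

definition primary :: "('i \<Rightarrow> nat) set \<Rightarrow> bool" where
  "primary M \<longleftrightarrow> (\<exists>x\<in>M. x \<noteq> (\<lambda>_. 0)) \<and>
     (\<forall>x\<in>M. \<forall>y\<in>M. x \<noteq> (\<lambda>_. 0) \<longrightarrow> y \<noteq> (\<lambda>_. 0) \<longrightarrow>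
        (\<exists>n::nat. \<exists>z\<in>M. (\<lambda>i. n * y i) = madd x z))"

text \<open>Grothendieck group of a submonoid of the free commutative monoid, realised as
  the subgroup {x - y | x, y in M} of the free abelian group of finitely supported 'i => int.\<close>
definition gp :: "('i \<Rightarrow> nat) set \<Rightarrow> ('i \<Rightarrow> int) set" where
  "gp M = {(\<lambda>i. int (x i) - int (y i)) | x y. x \<in> M \<and> y \<in> M}"

definition int_lin_indep :: "('i \<Rightarrow> int) set \<Rightarrow> bool" where
  "int_lin_indep S \<longleftrightarrow> finite S \<and>
     (\<forall>c :: ('i \<Rightarrow> int) \<Rightarrow> int. (\<forall>i. (\<Sum>s\<in>S. c s * s i) = 0) \<longrightarrow> (\<forall>s\<in>S. c s = 0))"

definition has_rank :: "('i \<Rightarrow> int) set \<Rightarrow> nat \<Rightarrow> bool" where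
  "has_rank G d \<longleftrightarrow> (\<exists>S\<subseteq>G. int_lin_indep S \<and> card S = d) \<and>
     (\<forall>S\<subseteq>G. int_lin_indep S \<longrightarrow> card S \<le> d)"

end

theory Submission imports Defs Complex_Main "HOL-Library.Function_Algebras" begin

definition sc :: "rat \<Rightarrow> ('i \<Rightarrow> rat) \<Rightarrow> ('i \<Rightarrow> rat)" where
  "sc c f = (\<lambda>i. c * f i)"

lemma vs_sc: "vector_space (sc :: rat \<Rightarrow> ('i \<Rightarrow> rat) \<Rightarrow> _)"
  by unfold_locales (auto simp: sc_def algebra_simps)

lemma sum_fun_app: "(\<Sum>v\<in>t. f v) i = (\<Sum>v\<in>t. (f v :: 'i \<Rightarrow> 'b::comm_monoid_add) i)"
  by (induction t rule: infinite_finite_induct) auto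

lemma rat_denom_int:
  fixes c :: "'a \<Rightarrow> rat"
  assumes "finite A" "s \<in> A"
  shows "of_int (\<Prod>t\<in>A. snd (quotient_of (c t))) * c s \<in> \<int>"
proof -
  obtain a b where ab: "quotient_of (c s) = (a, b)" by (cases "quotient_of (c s)")
  have b: "b > 0" using quotient_of_denom_pos[OF ab] .
  have cs: "c s = of_int a / of_int b" using quotient_of_div[OF ab] .
  have "(\<Prod>t\<in>A. snd (quotient_of (c t))) = b * (\<Prod>t\<in>A-{s}. snd (quotient_of (c t)))"
    using assms ab by (simp add: prod.remove)
  hence "of_int (\<Prod>t\<in>A. snd (quotient_of (c t))) * c s = of_int (a * (\<Prod>t\<in>A-{s}. snd (quotient_of (c t))))"
    using b cs by simp
  thus ?thesis by (metis Ints_of_int)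
qed

lemma rank_bound:
  fixes A :: "('i \<Rightarrow> int) set"
  assumes S: "finite S" and supp: "\<forall>s\<in>A. \<forall>i. i \<notin> S \<longrightarrow> s i = 0" and ind: "int_lin_indep A"
  shows "card A \<le> card S"
proof -
  interpret V: vector_space "sc :: rat \<Rightarrow> ('i \<Rightarrow> rat) \<Rightarrow> _" by (rule vs_sc)
  define g :: "('i \<Rightarrow> int) \<Rightarrow> ('i \<Rightarrow> rat)" where "g s = (\<lambda>i. rat_of_int (s i))" for s
  define \<delta> :: "'i \<Rightarrow> 'i \<Rightarrow> rat" where "\<delta> i = (\<lambda>j. if j = i then 1 else 0)" for i
  have finA: "finite A" using ind unfolding int_lin_indep_def by auto
  have injg: "inj g" unfolding g_def inj_def by (metis ext of_int_eq_iff)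
  have spn: "g ` A \<subseteq> V.span (\<delta> ` S)"
  proof
    fix v assume "v \<in> g ` A"
    then obtain s where s: "s \<in> A" "v = g s" by auto
    have "v = (\<Sum>i\<in>S. sc (v i) (\<delta> i))"
    proof
      fix j
      have "(\<Sum>i\<in>S. sc (v i) (\<delta> i)) j = (\<Sum>i\<in>S. v i * (if j = i then 1 else 0))"
        by (simp add: sum_fun_app sc_def \<delta>_def)
      also have "\<dots> = (if j \<in> S then v j else 0)"
        using S by (simp add: sum.delta if_distrib[of "\<lambda>x. _ * x"] cong: if_cong)
      also have "\<dots> = v j" using supp s by (auto simp: g_def)
      finally show "v j = (\<Sum>i\<in>S. sc (v i) (\<delta> i)) j" by simp
    qed
    also have "\<dots> \<in> V.span (\<delta> ` S)"
      by (intro V.span_sum V.span_scale V.span_base) auto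
    finally show "v \<in> V.span (\<delta> ` S)" .
  qed
  have indep: "V.independent (g ` A)"
    unfolding V.dependent_finite[OF finite_imageI[OF finA]]
  proof (intro notI, elim exE conjE bexE)
    fix c v assume v: "v \<in> g ` A" and c0: "(\<Sum>v\<in>g ` A. sc (c v) v) = 0"
    then obtain s0 where s0: "s0 \<in> A" "v = g s0" by auto
    define D where "D = (\<Prod>s\<in>A. snd (quotient_of (c (g s))))"
    have Dpos: "D > 0" unfolding D_def by (intro prod_pos) (simp add: quotient_of_denom_pos')
    define e where "e s = \<lfloor>of_int D * c (g s)\<rfloor>" for s
    have e: "of_int (e s) = of_int D * c (g s)" if "s \<in> A" for s
      using rat_denom_int[OF finA that, of "\<lambda>s. c (g s)"] unfolding e_def D_def
      by (metis floor_of_int Ints_cases)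
    have "\<forall>i. (\<Sum>s\<in>A. e s * s i) = 0"
    proof
      fix i
      have "(\<Sum>v\<in>g ` A. c v * v i) = 0"
        using fun_cong[OF c0, of i] by (simp add: sum_fun_app sc_def)
      hence "(\<Sum>s\<in>A. c (g s) * g s i) = 0"
        using injg by (simp add: sum.reindex inj_on_def)
      hence "of_int D * (\<Sum>s\<in>A. c (g s) * g s i) = 0" by simp
      hence "(\<Sum>s\<in>A. of_int (e s) * g s i) = 0"
        by (simp add: sum_distrib_left e mult.assoc cong: sum.cong)
      moreover have "rat_of_int (\<Sum>s\<in>A. e s * s i) = (\<Sum>s\<in>A. of_int (e s) * g s i)"
        by (simp add: g_def)
      ultimately have "rat_of_int (\<Sum>s\<in>A. e s * s i) = 0" by metis
      thus "(\<Sum>s\<in>A. e s * s i) = 0" using of_int_eq_0_iff by blast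
    qed
    hence "e s0 = 0" using ind s0 unfolding int_lin_indep_def by blast
    hence "of_int D * c (g s0) = 0" using e[OF s0(1)] by simp
    moreover assume "c v \<noteq> 0"
    ultimately show False using Dpos s0 by simp
  qed
  have "card (g ` A) \<le> card (\<delta> ` S)"
    using V.independent_span_bound[OF _ indep spn] S by simp
  also have "\<dots> \<le> card S" using S card_image_le by blast
  finally show ?thesis using injg by (simp add: card_image inj_on_subset)
qed

theorem mainTheorem14:
  fixes M :: "('i \<Rightarrow> nat) set"
  assumes "is_submonoid_free M" and "primary M"
  shows "\<exists>d. has_rank (gp M) d \<and>
           (\<exists>f :: ('i \<Rightarrow> nat) \<Rightarrow> (nat \<Rightarrow> nat).
              inj_on f M \<and> f (\<lambda>_. 0) = (\<lambda>_. 0) \<and>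
              (\<forall>x\<in>M. \<forall>y\<in>M. f (madd x y) = madd (f x) (f y)) \<and>
              (\<forall>x\<in>M. \<forall>j\<ge>d. f x j = 0))"
proof -
  from assms(2) obtain x0 where x0: "x0 \<in> M" "x0 \<noteq> (\<lambda>_. 0)" unfolding primary_def by blast
  define S0 where "S0 = {i. x0 i \<noteq> 0}"
  have finS0: "finite S0" using assms(1) x0 unfolding S0_def is_submonoid_free_def free_cmon_def by auto
  have supp: "y i = 0" if y: "y \<in> M" and i: "i \<notin> S0" for y i
  proof (cases "y = (\<lambda>_. 0)")
    case True thus ?thesis by simp
  next
    case False
    then obtain n z where "z \<in> M" "(\<lambda>i. n * x0 i) = madd y z"
      using assms(2) y x0 unfolding primary_def by blast
    hence "n * x0 i = y i + z i" unfolding madd_def by (metis)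
    thus ?thesis using i unfolding S0_def by simp
  qed
  have gpsupp: "\<forall>s\<in>gp M. \<forall>i. i \<notin> S0 \<longrightarrow> s i = 0"
    unfolding gp_def by (auto simp: supp)
  define R where "R = {card A | A. A \<subseteq> gp M \<and> int_lin_indep A}"
  have Rb: "r \<le> card S0" if "r \<in> R" for r
    using that rank_bound[OF finS0] gpsupp unfolding R_def by blast
  have finR: "finite R" using Rb by (meson finite_nat_set_iff_bounded_le)
  have "card ({} :: ('i \<Rightarrow> int) set) \<in> R" unfolding R_def int_lin_indep_def by blast
  hence Rne: "R \<noteq> {}" by blast
  define d where "d = Max R"
  have rank: "has_rank (gp M) d"
  proof -
    have "d \<in> R" unfolding d_def using finR Rne by simp
    moreover have "card A \<le> d" if "A \<subseteq> gp M" "int_lin_indep A" for A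
      unfolding d_def using finR that by (intro Max_ge) (auto simp: R_def)
    ultimately show ?thesis unfolding has_rank_def R_def by blast
  qed
  define P where "P J \<longleftrightarrow> finite J \<and> (\<forall>x\<in>M. \<forall>y\<in>M. (\<forall>j\<in>J. x j = y j) \<longrightarrow> x = y)" for J
  have PS0: "P S0" unfolding P_def using finS0 supp by (metis ext)
  obtain n where n: "\<exists>J. P J \<and> card J = n" "\<And>m. m < n \<Longrightarrow> \<not> (\<exists>J. P J \<and> card J = m)"
    using exists_least_iff[of "\<lambda>n. \<exists>J. P J \<and> card J = n"] PS0 by blast
  then obtain J where J: "P J" "card J = n" by blast
  have finJ: "finite J" using J unfolding P_def by simp
  have "\<exists>x y. x \<in> M \<and> y \<in> M \<and> (\<forall>k\<in>J-{j}. x k = y k) \<and> x j \<noteq> y j" if j: "j \<in> J" for j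
  proof -
    have "card (J - {j}) < n" using J j finJ by (metis card_Diff1_less)
    hence "\<not> P (J - {j})" using n(2) by blast
    then obtain x y where xy: "x \<in> M" "y \<in> M" "\<forall>k\<in>J-{j}. x k = y k" "x \<noteq> y"
      using finJ unfolding P_def by blast
    have "x j \<noteq> y j"
    proof
      assume "x j = y j"
      hence "\<forall>k\<in>J. x k = y k" using xy(3) by blast
      thus False using J(1) xy unfolding P_def by blast
    qed
    thus ?thesis using xy by blast
  qed
  then obtain X Y where XY: "\<And>j. j \<in> J \<Longrightarrow> X j \<in> M \<and> Y j \<in> M \<and> (\<forall>k\<in>J-{j}. X j k = Y j k) \<and> X j j \<noteq> Y j j"
    by metis
  define w where "w j = (\<lambda>i. int (X j i) - int (Y j i))" for j
  have wjj: "w j j \<noteq> 0" if "j \<in> J" for j using XY[OF that] unfolding w_def by simp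
  have wjk: "w j k = 0" if "j \<in> J" "k \<in> J" "k \<noteq> j" for j k using XY[OF that(1)] that unfolding w_def by simp
  have injw: "inj_on w J"
  proof (rule inj_onI)
    fix j k assume "j \<in> J" "k \<in> J" "w j = w k"
    thus "j = k" using wjj wjk by metis
  qed
  have Wgp: "w ` J \<subseteq> gp M" unfolding gp_def w_def using XY by blast
  have Wind: "int_lin_indep (w ` J)"
    unfolding int_lin_indep_def
  proof (intro conjI allI impI ballI)
    show "finite (w ` J)" using finJ by simp
    fix c s assume c: "\<forall>i. (\<Sum>s\<in>w ` J. c s * s i) = 0" and s: "s \<in> w ` J"
    then obtain j where j: "j \<in> J" "s = w j" by blast
    have "0 = (\<Sum>s\<in>w ` J. c s * s j)" using c by simp
    also have "\<dots> = (\<Sum>k\<in>J. c (w k) * w k j)" using injw by (simp add: sum.reindex)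
    also have "\<dots> = c (w j) * w j j"
      using finJ j by (subst sum.remove[of _ j]) (auto intro!: sum.neutral dest: wjk[of _ j])
    finally show "c s = 0" using wjj[OF j(1)] j by simp
  qed
  have Jd: "card J \<le> d"
  proof -
    have "card (w ` J) \<in> R" unfolding R_def using Wgp Wind by blast
    hence "card (w ` J) \<le> d" unfolding d_def using finR by simp
    thus ?thesis using injw by (simp add: card_image)
  qed
  obtain h where h: "bij_betw h {0..<card J} J" using ex_bij_betw_nat_finite[OF finJ] by blast
  define f :: "('i \<Rightarrow> nat) \<Rightarrow> (nat \<Rightarrow> nat)" where
    "f x = (\<lambda>m. if m < card J then x (h m) else 0)" for x
  have "inj_on f M"
  proof (rule inj_onI)
    fix x y assume xy: "x \<in> M" "y \<in> M" "f x = f y"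
    have "\<forall>j\<in>J. x j = y j"
    proof
      fix j assume "j \<in> J"
      then obtain m where m: "m < card J" "j = h m" using h unfolding bij_betw_def by (metis atLeastLessThan_iff imageE)
      show "x j = y j" using fun_cong[OF xy(3), of m] m unfolding f_def by simp
    qed
    thus "x = y" using J(1) xy unfolding P_def by blast
  qed
  moreover have "f (\<lambda>_. 0) = (\<lambda>_. 0)" unfolding f_def by auto
  moreover have "\<forall>x\<in>M. \<forall>y\<in>M. f (madd x y) = madd (f x) (f y)"
    unfolding f_def madd_def by auto
  moreover have "\<forall>x\<in>M. \<forall>j\<ge>d. f x j = 0" unfolding f_def using Jd by auto
  ultimately show ?thesis using rank by blast
qed

end
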